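(* Assume the general coarsening setting described in the context, and suppose CAR(GCMP) holds, i.e. $\mathcal{L}^{\psi/\psi_0}_{\mathcal{R}|\mathcal{X}}$ is $\mathcal{O}$-measurable for all $(\theta,\psi)$. Then $$\mathcal{L}^{(\theta,\psi)/(\theta_0,\psi_0)}_{\mathcal{O}}=\mathcal{L}^{\psi/\psi_0}_{\mathcal{R}|\mathcal{X}}\;E_{(\theta_0,\psi_0)}\big(\mathcal{L}^{\theta/\theta_0}_{\mathcal{X}}\,\big|\,\mathcal{O}\big)\quad\text{a.s.},$$ and $E_{(\theta_0,\psi_0)}\big(\mathcal{L}^{\theta/\theta_0}_{\mathcal{X}}\mid\mathcal{O}\big)$ does not depend on $\psi_0$.
   Context: Setting. On a measurable space $(\Omega,\mathcal{F})$ live two càdlàg stochastic processes: $X=(X_t)_{t\ge0}$ with values in $\mathbb{R}^d$ (path space a Skorohod space) and a response indicator process $R=(R_t)_{t\ge0}$ with values in $\{0,1\}$, $R_t=1$ meaning $X_t$ is observed. Let $\mathcal{X}=\sigma(X_t,t\ge0)$, $\mathcal{R}=\sigma(R_t,t\ge0)$, $\mathcal{F}=\mathcal{X}\vee\mathcal{R}$. A model is a family $\{P_{(\theta,\psi)}:(\theta,\psi)\in\Theta\times\Psi\}$ of mutually equivalent probability measures on $\mathcal{F}$ with reference measure $P_{(\theta_0,\psi_0)}$; the restriction of $P_{(\theta,\psi)}$ to $\mathcal{X}$ depends only on $\theta$ (denoted $P_\theta$). Non-informativeness: $P_{(\theta_1,\psi)}(A\mid\mathcal{X})=P_{(\theta_2,\psi)}(A\mid\mathcal{X})$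 a.s. for all $A\in\mathcal{R}$, all $\theta_1,\theta_2,\psi$. For a sub-$\sigma$-field $\mathcal{G}$, $\mathcal{L}^{(\theta,\psi)/(\theta_0,\psi_0)}_{\mathcal{G}}$ is the Radon–Nikodym derivative $dP_{(\theta,\psi)}/dP_{(\theta_0,\psi_0)}$ restricted to $\mathcal{G}$; $\mathcal{L}^{\theta/\theta_0}_{\mathcal{X}}=dP_\theta/dP_{\theta_0}$ on $\mathcal{X}$. The conditional likelihood ratio is $\mathcal{L}_{\mathcal{Y}|\mathcal{G}}=\mathcal{L}_{\mathcal{G}\vee\mathcal{Y}}/\mathcal{L}_{\mathcal{G}}$; by non-informativeness $\mathcal{L}^{(\theta,\psi)/(\theta_0,\psi_0)}_{\mathcal{R}|\mathcal{X}}$ does not depend on $\theta$ and is denoted $\mathcal{L}^{\psi/\psi_0}_{\mathcal{R}|\mathcal{X}}$. The observed $\sigma$-field is $\mathcal{O}=\sigma(R_tX_t,R_t,\ t\ge0)$. *)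

theory Defs
  imports "HOL-Probability.Probability"
begin

definition cadlag :: "(real \<Rightarrow> 'b::topological_space) \<Rightarrow> bool" where
  "cadlag f \<longleftrightarrow> (\<forall>t\<ge>0. (f \<longlongrightarrow> f t) (at_right t) \<and> (t > 0 \<longrightarrow> (\<exists>l. (f \<longlongrightarrow> l) (at_left t))))"

definition proc_sigma :: "'w set \<Rightarrow> (real \<Rightarrow> 'w \<Rightarrow> 'b::topological_space) \<Rightarrow> 'w measure" where
  "proc_sigma \<Omega> Y = sigma \<Omega> (\<Union>t\<in>{0..}. {Y t -` B \<inter> \<Omega> | B. B \<in> sets borel})"

definition join_sigma :: "'w set \<Rightarrow> 'w measure \<Rightarrow> 'w measure \<Rightarrow> 'w measure" where
  "join_sigma \<Omega> G H = sigma \<Omega> (sets G \<union> sets H)"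

text \<open>Likelihood ratio dP/dQ restricted to the sub-sigma-field G.\<close>
definition LR :: "'w measure \<Rightarrow> 'w measure \<Rightarrow> 'w measure \<Rightarrow> 'w \<Rightarrow> ennreal" where
  "LR P Q G = RN_deriv (restr_to_subalg Q G) (restr_to_subalg P G)"

definition cond_LR :: "'w set \<Rightarrow> 'w measure \<Rightarrow> 'w measure \<Rightarrow> 'w measure \<Rightarrow> 'w measure \<Rightarrow> 'w \<Rightarrow> ennreal" where
  "cond_LR \<Omega> P Q Y G = (\<lambda>\<omega>. LR P Q (join_sigma \<Omega> G Y) \<omega> / LR P Q G \<omega>)"

end

theory Submission
  imports Defs
begin

locale lrset =
  fixes M N G :: "'w measure"
  assumes M: "finite_measure M" and N: "finite_measure N"
    and sp: "space N = space M" and st: "sets N = sets M"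
    and acMN: "absolutely_continuous M N" and acNM: "absolutely_continuous N M"
    and sub: "subalgebra M G"
begin

lemma subN: "subalgebra N G" using sub sp st unfolding subalgebra_def by auto

lemma finR: "finite_measure (restr_to_subalg M G)"
  using finite_measure_restr_to_subalg[OF sub] M by (simp add: finite_measure.finite_emeasure_space)

lemma finRN: "finite_measure (restr_to_subalg N G)"
  using finite_measure_restr_to_subalg[OF subN] N by (simp add: finite_measure.finite_emeasure_space)

lemma acR: "absolutely_continuous (restr_to_subalg M G) (restr_to_subalg N G)"
  using acMN unfolding absolutely_continuous_def
  by (auto simp: null_sets_restr_to_subalg[OF sub] null_sets_restr_to_subalg[OF subN])

lemma setsR: "sets (restr_to_subalg N G) = sets (restr_to_subalg M G)"
  by (simp add: sets_restr_to_subalg[OF sub] sets_restr_to_subalg[OF subN])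

lemma dens: "density (restr_to_subalg M G) (LR N M G) = restr_to_subalg N G"
  unfolding LR_def
  using sigma_finite_measure.density_RN_deriv[OF finite_measure.sigma_finite_measure[OF finR] acR setsR] .

lemma LR_meas_G: "LR N M G \<in> borel_measurable G"
  unfolding LR_def using borel_measurable_RN_deriv measurable_cong_sets sets_restr_to_subalg[OF sub]
  by (metis measurable_in_subalg')
  
lemma LR_meas: "LR N M G \<in> borel_measurable M"
  using measurable_from_subalg[OF sub LR_meas_G] .

lemma LR_int: assumes f: "f \<in> borel_measurable G"
  shows "(\<integral>\<^sup>+x. f x \<partial>N) = (\<integral>\<^sup>+x. LR N M G x * f x \<partial>M)"
proof -
  have "(\<integral>\<^sup>+x. f x \<partial>N) = (\<integral>\<^sup>+x. f x \<partial>restr_to_subalg N G)"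
    by (rule nn_integral_subalgebra2[symmetric, OF subN f])
  also have "\<dots> = (\<integral>\<^sup>+x. f x \<partial>density (restr_to_subalg M G) (LR N M G))" by (simp add: dens)
  also have "\<dots> = (\<integral>\<^sup>+x. LR N M G x * f x \<partial>restr_to_subalg M G)"
    apply (rule nn_integral_density)
    using LR_meas_G f measurable_in_subalg[OF sub] by auto
  also have "\<dots> = (\<integral>\<^sup>+x. LR N M G x * f x \<partial>M)"
    apply (rule nn_integral_subalgebra2[OF sub]) using LR_meas_G f by measurable
  finally show ?thesis .
qed

lemma LR_emeasure: assumes A: "A \<in> sets G"
  shows "emeasure N A = (\<integral>\<^sup>+x. LR N M G x * indicator A x \<partial>M)"
proof -
  have "emeasure N A = (\<integral>\<^sup>+x. indicator A x \<partial>N)"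
    using A subN by (intro nn_integral_indicator[symmetric]) (auto simp: subalgebra_def)
  also have "\<dots> = (\<integral>\<^sup>+x. LR N M G x * indicator A x \<partial>M)"
    by (rule LR_int) (use A in measurable)
  finally show ?thesis .
qed

lemma LR_unique: assumes f: "f \<in> borel_measurable G"
  and eq: "\<And>A. A \<in> sets G \<Longrightarrow> emeasure N A = (\<integral>\<^sup>+x. f x * indicator A x \<partial>M)"
  shows "AE x in M. LR N M G x = f x"
proof -
  have fR: "f \<in> borel_measurable (restr_to_subalg M G)" using f measurable_in_subalg[OF sub] by auto
  have "density (restr_to_subalg M G) f = restr_to_subalg N G"
  proof (rule measure_eqI)
    show "sets (density (restr_to_subalg M G) f) = sets (restr_to_subalg N G)" using setsR by simp
    fix A assume "A \<in> sets (density (restr_to_subalg M G) f)"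
    then have A: "A \<in> sets G" by (simp add: sets_restr_to_subalg[OF sub])
    have "emeasure (density (restr_to_subalg M G) f) A = (\<integral>\<^sup>+x. f x * indicator A x \<partial>restr_to_subalg M G)"
      by (rule emeasure_density[OF fR]) (simp add: sets_restr_to_subalg[OF sub] A)
    also have "\<dots> = (\<integral>\<^sup>+x. f x * indicator A x \<partial>M)"
      apply (rule nn_integral_subalgebra2[OF sub]) using f A by measurable
    also have "\<dots> = emeasure (restr_to_subalg N G) A" using eq[OF A] emeasure_restr_to_subalg[OF subN A] by simp
    finally show "emeasure (density (restr_to_subalg M G) f) A = emeasure (restr_to_subalg N G) A" .
  qed
  then have "AE x in restr_to_subalg M G. f x = LR N M G x" unfolding LR_def
    by (rule sigma_finite_measure.RN_deriv_unique[OF finite_measure.sigma_finite_measure[OF finR] fR])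
  then have "AE x in M. f x = LR N M G x" by (rule AE_restr_to_subalg[OF sub])
  then show ?thesis by auto
qed

lemma LR_fin: "AE x in M. LR N M G x \<noteq> \<infinity>"
proof -
  have "AE x in restr_to_subalg M G. LR N M G x \<noteq> \<infinity>" unfolding LR_def
    by (rule sigma_finite_measure.RN_deriv_finite[OF finite_measure.sigma_finite_measure[OF finR]
         finite_measure.sigma_finite_measure[OF finRN] acR setsR])
  then show ?thesis by (rule AE_restr_to_subalg[OF sub])
qed

lemma LR_pos: "AE x in M. LR N M G x \<noteq> 0"
proof -
  let ?Z = "{x\<in>space M. LR N M G x = 0}"
  have ZG: "?Z \<in> sets G"
  proof -
    have "{x\<in>space G. LR N M G x = 0} \<in> sets G" using LR_meas_G by measurable
    moreover have "space G = space M" using sub by (simp add: subalgebra_def)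
    ultimately show ?thesis by simp
  qed
  have "emeasure N ?Z = (\<integral>\<^sup>+x. LR N M G x * indicator ?Z x \<partial>M)" by (rule LR_emeasure[OF ZG])
  also have "\<dots> = (\<integral>\<^sup>+x. 0 \<partial>M)"
    by (rule nn_integral_cong) (auto simp: indicator_def)
  finally have "emeasure N ?Z = 0" by simp
  moreover have "?Z \<in> sets N" using ZG sub st by (auto simp: subalgebra_def)
  ultimately have "?Z \<in> null_sets N" by auto
  then have "?Z \<in> null_sets M" using acNM unfolding absolutely_continuous_def by auto
  then show ?thesis by (rule AE_I') auto
qed

end

lemma restr_eq:
  assumes "subalgebra M1 G" "subalgebra M2 G" "\<And>A. A \<in> sets G \<Longrightarrow> emeasure M1 A = emeasure M2 A"
  shows "restr_to_subalg M1 G = restr_to_subalg M2 G"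
  apply (rule measure_eqI)
  using assms by (auto simp: sets_restr_to_subalg emeasure_restr_to_subalg)

lemma LR_eq:
  assumes "subalgebra M1 G" "subalgebra M2 G" "\<And>A. A \<in> sets G \<Longrightarrow> emeasure M1 A = emeasure M2 A"
    "subalgebra N1 G" "subalgebra N2 G" "\<And>A. A \<in> sets G \<Longrightarrow> emeasure N1 A = emeasure N2 A"
  shows "LR N1 M1 G = LR N2 M2 G"
  unfolding LR_def using restr_eq[OF assms(1-3)] restr_eq[OF assms(4-6)] by simp


lemma divh: fixes a b g :: ennreal assumes "a / b = g" "b \<noteq> 0" "b \<noteq> \<infinity>" shows "a = g * b"
proof -
  have "g * b = a * (b / b)" using assms(1) ennreal_divide_times[of a b b] by simp
  also have "\<dots> = a" using assms(2,3) by (simp add: top.not_eq_extremum)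
  finally show ?thesis by simp
qed

lemma space_proc: "space (proc_sigma \<Omega> Y) = \<Omega>"
  unfolding proc_sigma_def by (simp add: space_measure_of_conv)

lemma sets_proc: "sets (proc_sigma \<Omega> Y) = sigma_sets \<Omega> (\<Union>t\<in>{0..}. {Y t -` B \<inter> \<Omega> | B. B \<in> sets borel})"
  unfolding proc_sigma_def by (rule sets_measure_of) auto

lemma space_join: "space (join_sigma \<Omega> G H) = \<Omega>"
  unfolding join_sigma_def by (simp add: space_measure_of_conv)

lemma sets_join: "space G = \<Omega> \<Longrightarrow> space H = \<Omega> \<Longrightarrow> sets (join_sigma \<Omega> G H) = sigma_sets \<Omega> (sets G \<union> sets H)"
  unfolding join_sigma_def by (rule sets_measure_of) (auto dest: sets.sets_into_space)

lemma proc_meas: "t \<ge> 0 \<Longrightarrow> Y t \<in> borel_measurable (proc_sigma \<Omega> Y)"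
  unfolding measurable_def by (auto simp: space_proc sets_proc intro!: sigma_sets.Basic)

lemma sets_proc_sub:
  assumes "\<And>t. t \<ge> 0 \<Longrightarrow> Y t \<in> borel_measurable F" "space F = \<Omega>"
  shows "sets (proc_sigma \<Omega> Y) \<subseteq> sets F"
  unfolding sets_proc using assms(2)[symmetric]
  apply simp
  apply (rule sets.sigma_sets_subset)
  using assms by (auto intro: measurable_sets)

theorem theorem2:
  fixes \<Omega> :: "'w set"
    and X :: "real \<Rightarrow> 'w \<Rightarrow> real ^ 'd"
    and R :: "real \<Rightarrow> 'w \<Rightarrow> real"
    and P :: "'th \<Rightarrow> 'ps \<Rightarrow> 'w measure"
    and \<Theta> :: "'th set" and \<Psi> :: "'ps set"
    and \<theta>0 :: 'th and \<psi>0 :: 'ps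
  defines "\<X> \<equiv> proc_sigma \<Omega> X"
    and "\<R> \<equiv> proc_sigma \<Omega> R"
    and "\<F> \<equiv> join_sigma \<Omega> (proc_sigma \<Omega> X) (proc_sigma \<Omega> R)"
    and "\<O> \<equiv> join_sigma \<Omega> (proc_sigma \<Omega> (\<lambda>t \<omega>. R t \<omega> *\<^sub>R X t \<omega>)) (proc_sigma \<Omega> R)"
  assumes cadlag_X: "\<forall>\<omega>\<in>\<Omega>. cadlag (\<lambda>t. X t \<omega>)"
    and cadlag_R: "\<forall>\<omega>\<in>\<Omega>. cadlag (\<lambda>t. R t \<omega>)"
    and R_01: "\<forall>t\<ge>0. \<forall>\<omega>\<in>\<Omega>. R t \<omega> \<in> {0, 1}"
    and ref: "\<theta>0 \<in> \<Theta>" "\<psi>0 \<in> \<Psi>"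
    and prob: "\<forall>\<theta>\<in>\<Theta>. \<forall>\<psi>\<in>\<Psi>. prob_space (P \<theta> \<psi>) \<and> space (P \<theta> \<psi>) = \<Omega> \<and> sets (P \<theta> \<psi>) = sets \<F>"
    and equiv: "\<forall>\<theta>1\<in>\<Theta>. \<forall>\<psi>1\<in>\<Psi>. \<forall>\<theta>2\<in>\<Theta>. \<forall>\<psi>2\<in>\<Psi>.
                  absolutely_continuous (P \<theta>1 \<psi>1) (P \<theta>2 \<psi>2)"
    and X_marg: "\<forall>\<theta>\<in>\<Theta>. \<forall>\<psi>1\<in>\<Psi>. \<forall>\<psi>2\<in>\<Psi>. \<forall>A\<in>sets \<X>.
                  emeasure (P \<theta> \<psi>1) A = emeasure (P \<theta> \<psi>2) A"
    and noninf: "\<forall>\<theta>1\<in>\<Theta>. \<forall>\<theta>2\<in>\<Theta>. \<forall>\<psi>\<in>\<Psi>. \<forall>A\<in>sets \<R>.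
                  AE \<omega> in P \<theta>1 \<psi>. real_cond_exp (P \<theta>1 \<psi>) \<X> (indicator A) \<omega>
                                   = real_cond_exp (P \<theta>2 \<psi>) \<X> (indicator A) \<omega>"
    and CAR: "\<forall>\<theta>\<in>\<Theta>. \<forall>\<psi>\<in>\<Psi>. \<exists>g \<in> borel_measurable \<O>.
                  AE \<omega> in P \<theta>0 \<psi>0. cond_LR \<Omega> (P \<theta> \<psi>) (P \<theta>0 \<psi>0) \<R> \<X> \<omega> = g \<omega>"
    and par: "\<theta> \<in> \<Theta>" "\<psi> \<in> \<Psi>"
  shows "(AE \<omega> in P \<theta>0 \<psi>0.
            LR (P \<theta> \<psi>) (P \<theta>0 \<psi>0) \<O> \<omega>
              = cond_LR \<Omega> (P \<theta> \<psi>) (P \<theta>0 \<psi>0) \<R> \<X> \<omega>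
                * nn_cond_exp (P \<theta>0 \<psi>0) \<O> (LR (P \<theta> \<psi>0) (P \<theta>0 \<psi>0) \<X>) \<omega>)
       \<and> (\<forall>\<psi>1\<in>\<Psi>. AE \<omega> in P \<theta>0 \<psi>0.
            nn_cond_exp (P \<theta>0 \<psi>1) \<O> (LR (P \<theta> \<psi>1) (P \<theta>0 \<psi>1) \<X>) \<omega>
              = nn_cond_exp (P \<theta>0 \<psi>0) \<O> (LR (P \<theta> \<psi>0) (P \<theta>0 \<psi>0) \<X>) \<omega>)"
proof -
  note dX = \<open>\<X> \<equiv> proc_sigma \<Omega> X\<close>
  note dR = \<open>\<R> \<equiv> proc_sigma \<Omega> R\<close>
  note dF = \<open>\<F> \<equiv> join_sigma \<Omega> (proc_sigma \<Omega> X) (proc_sigma \<Omega> R)\<close>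
  note dO = \<open>\<O> \<equiv> join_sigma \<Omega> (proc_sigma \<Omega> (\<lambda>t \<omega>. R t \<omega> *\<^sub>R X t \<omega>)) (proc_sigma \<Omega> R)\<close>
  have spX: "space \<X> = \<Omega>" unfolding dX by (rule space_proc)
  have spR: "space \<R> = \<Omega>" unfolding dR by (rule space_proc)
  have spF: "space \<F> = \<Omega>" unfolding dF by (rule space_join)
  have spO: "space \<O> = \<Omega>" unfolding dO by (rule space_join)
  have setsF: "sets \<F> = sigma_sets \<Omega> (sets \<X> \<union> sets \<R>)"
    unfolding dF dX dR by (rule sets_join) (simp_all add: space_proc)
  have sX: "sets \<X> \<subseteq> sets \<F>" unfolding setsF by (auto intro: sigma_sets.Basic)
  have sR: "sets \<R> \<subseteq> sets \<F>" unfolding setsF by (auto intro: sigma_sets.Basic)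
  have subFX: "subalgebra \<F> \<X>" using sX spX spF by (simp add: subalgebra_def)
  have subFR: "subalgebra \<F> \<R>" using sR spR spF by (simp add: subalgebra_def)
  have mXt: "X t \<in> borel_measurable \<F>" if "t \<ge> 0" for t
    using measurable_from_subalg[OF subFX] proc_meas[OF that, where \<Omega>=\<Omega> and Y=X] dX by simp
  have mRt: "R t \<in> borel_measurable \<F>" if "t \<ge> 0" for t
    using measurable_from_subalg[OF subFR] proc_meas[OF that, where \<Omega>=\<Omega> and Y=R] dR by simp
  have sO1: "sets (proc_sigma \<Omega> (\<lambda>t \<omega>. R t \<omega> *\<^sub>R X t \<omega>)) \<subseteq> sets \<F>"
    by (rule sets_proc_sub[OF _ spF]) (use mXt mRt in measurable)
  have sRF': "sets (proc_sigma \<Omega> R) \<subseteq> sets \<F>" using sR dR by simp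
  have sO: "sets \<O> \<subseteq> sets \<F>"
    unfolding dO
    apply (subst sets_join) apply (simp_all add: space_proc)
    using sets.sigma_sets_subset[of "sets (proc_sigma \<Omega> (\<lambda>t \<omega>. R t \<omega> *\<^sub>R X t \<omega>)) \<union> sets (proc_sigma \<Omega> R)" \<F>]
      sO1 sRF' spF by simp
  have jF: "join_sigma \<Omega> \<X> \<R> = \<F>" unfolding dX dR dF ..
  have PP: "prob_space (P a b) \<and> space (P a b) = \<Omega> \<and> sets (P a b) = sets \<F>" if "a\<in>\<Theta>" "b\<in>\<Psi>" for a b
    using prob that by auto
  have SUB: "subalgebra (P a b) G" if "a\<in>\<Theta>" "b\<in>\<Psi>" "space G = \<Omega>" "sets G \<subseteq> sets \<F>" for a b G
    using PP[OF that(1,2)] that(3,4) by (simp add: subalgebra_def)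
  have LS: "lrset (P a' b') (P a b) G" if "a\<in>\<Theta>" "b\<in>\<Psi>" "a'\<in>\<Theta>" "b'\<in>\<Psi>" "space G = \<Omega>" "sets G \<subseteq> sets \<F>" for a b a' b' G
    unfolding lrset_def using PP[OF that(1,2)] PP[OF that(3,4)] SUB[OF that(3-6)]
      equiv[rule_format, OF that(3,4,1,2)] equiv[rule_format, OF that(1,2,3,4)]
    by (auto simp: prob_space.finite_measure)
  have FS: "sigma_finite_subalgebra (P a b) \<O>" if "a\<in>\<Theta>" "b\<in>\<Psi>" for a b
    apply (rule finite_measure_subalgebra_is_sigma_finite)
    unfolding finite_measure_subalgebra_def finite_measure_subalgebra_axioms_def
    using PP[OF that] SUB[OF that spO sO] by (auto simp: prob_space.finite_measure)
  have Xeq: "LR (P a b1) (P \<theta>0 c1) \<X> = LR (P a b2) (P \<theta>0 c2) \<X>"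
    if "a\<in>\<Theta>" "b1\<in>\<Psi>" "b2\<in>\<Psi>" "c1\<in>\<Psi>" "c2\<in>\<Psi>" for a b1 b2 c1 c2
    apply (rule LR_eq)
         apply (rule SUB[OF ref(1) that(4) spX sX])
        apply (rule SUB[OF ref(1) that(5) spX sX])
       apply (erule X_marg[rule_format, OF ref(1) that(4) that(5)])
      apply (rule SUB[OF that(1,2) spX sX])
     apply (rule SUB[OF that(1,3) spX sX])
    apply (erule X_marg[rule_format, OF that(1,2,3)])
    done
  define Q where "Q = P \<theta>0 \<psi>0"
  define hX where "hX = LR (P \<theta> \<psi>) Q \<X>"
  define h where "h = LR (P \<theta> \<psi>0) Q \<X>"
  have hXh: "hX = h" unfolding hX_def h_def Q_def using Xeq[OF par(1) par(2) ref(2) ref(2) ref(2)] .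
  have part1: "AE \<omega> in Q. LR (P \<theta> \<psi>) Q \<O> \<omega> = cond_LR \<Omega> (P \<theta> \<psi>) Q \<R> \<X> \<omega> * nn_cond_exp Q \<O> h \<omega>"
  proof -
    obtain g where g: "g \<in> borel_measurable \<O>" "AE \<omega> in Q. cond_LR \<Omega> (P \<theta> \<psi>) Q \<R> \<X> \<omega> = g \<omega>"
      using CAR par unfolding Q_def by blast
    interpret X1: lrset Q "P \<theta> \<psi>" \<X> unfolding Q_def by (rule LS[OF par ref spX sX])
    interpret F1: lrset Q "P \<theta> \<psi>" \<F> unfolding Q_def by (rule LS[OF par ref spF order_refl])
    interpret O1: lrset Q "P \<theta> \<psi>" \<O> unfolding Q_def by (rule LS[OF par ref spO sO])
    interpret CE: sigma_finite_subalgebra Q \<O> unfolding Q_def by (rule FS[OF ref])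
    have c: "cond_LR \<Omega> (P \<theta> \<psi>) Q \<R> \<X> = (\<lambda>\<omega>. LR (P \<theta> \<psi>) Q \<F> \<omega> / hX \<omega>)"
      unfolding cond_LR_def jF hX_def ..
    have AEF: "AE \<omega> in Q. LR (P \<theta> \<psi>) Q \<F> \<omega> = g \<omega> * hX \<omega>"
      using g(2) X1.LR_fin X1.LR_pos unfolding c hX_def
      by eventually_elim (rule divh, auto)
    define E where "E = nn_cond_exp Q \<O> hX"
    have "AE \<omega> in Q. LR (P \<theta> \<psi>) Q \<O> \<omega> = g \<omega> * E \<omega>"
    proof (rule O1.LR_unique)
      show "(\<lambda>\<omega>. g \<omega> * E \<omega>) \<in> borel_measurable \<O>" using g(1) unfolding E_def by measurable
      fix A assume A: "A \<in> sets \<O>"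
      have hm: "hX \<in> borel_measurable Q" unfolding hX_def by (rule X1.LR_meas)
      have "emeasure (P \<theta> \<psi>) A = (\<integral>\<^sup>+x. LR (P \<theta> \<psi>) Q \<F> x * indicator A x \<partial>Q)"
        using F1.LR_emeasure A sO by auto
      also have "\<dots> = (\<integral>\<^sup>+x. (indicator A x * g x) * hX x \<partial>Q)"
        by (rule nn_integral_cong_AE) (use AEF in \<open>auto simp: ac_simps\<close>)
      also have "\<dots> = (\<integral>\<^sup>+x. (indicator A x * g x) * E x \<partial>Q)"
        unfolding E_def by (rule CE.nn_cond_exp_intg[symmetric]) (use A g(1) hm in measurable)
      also have "\<dots> = (\<integral>\<^sup>+x. (g x * E x) * indicator A x \<partial>Q)" by (simp add: ac_simps)
      finally show "emeasure (P \<theta> \<psi>) A = (\<integral>\<^sup>+x. (g x * E x) * indicator A x \<partial>Q)" .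
    qed
    then show ?thesis using g(2) unfolding E_def hXh by eventually_elim simp
  qed
  have part2: "AE \<omega> in Q. nn_cond_exp (P \<theta>0 \<psi>1) \<O> (LR (P \<theta> \<psi>1) (P \<theta>0 \<psi>1) \<X>) \<omega> = nn_cond_exp Q \<O> h \<omega>"
    if psi1: "\<psi>1 \<in> \<Psi>" for \<psi>1
  proof -
    define Q1 where "Q1 = P \<theta>0 \<psi>1"
    have hh: "LR (P \<theta> \<psi>1) (P \<theta>0 \<psi>1) \<X> = h" unfolding h_def Q_def using Xeq[OF par(1) psi1 ref(2) psi1 ref(2)] .
    obtain g1 where g1: "g1 \<in> borel_measurable \<O>" "AE \<omega> in Q. cond_LR \<Omega> Q1 Q \<R> \<X> \<omega> = g1 \<omega>"
      using CAR ref psi1 unfolding Q_def Q1_def by blast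
    interpret K: lrset Q Q1 \<F> unfolding Q_def Q1_def by (rule LS[OF ref(1) psi1 ref spF order_refl])
    interpret KX: lrset Q Q1 \<X> unfolding Q_def Q1_def by (rule LS[OF ref(1) psi1 ref spX sX])
    interpret CE: sigma_finite_subalgebra Q \<O> unfolding Q_def by (rule FS[OF ref])
    interpret CE1: sigma_finite_subalgebra Q1 \<O> unfolding Q1_def by (rule FS[OF ref(1) psi1])
    define k where "k = LR Q1 Q \<F>"
    have one: "AE \<omega> in Q. LR Q1 Q \<X> \<omega> = 1"
    proof (rule KX.LR_unique)
      fix A assume A: "A \<in> sets \<X>"
      have "emeasure Q1 A = emeasure Q A" using X_marg[rule_format, OF ref(1) psi1 ref(2) A] unfolding Q_def Q1_def .
      also have "\<dots> = (\<integral>\<^sup>+x. indicator A x \<partial>Q)"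
        by (rule nn_integral_indicator[symmetric]) (use A sX PP[OF ref] in \<open>auto simp: Q_def\<close>)
      finally show "emeasure Q1 A = (\<integral>\<^sup>+x. 1 * indicator A x \<partial>Q)" by simp
    qed simp
    have kg: "AE \<omega> in Q. k \<omega> = g1 \<omega>"
      using one g1(2) unfolding cond_LR_def jF k_def by eventually_elim (simp add: divide_ennreal_def)
    have g1nz: "AE \<omega> in Q. g1 \<omega> \<noteq> 0 \<and> g1 \<omega> \<noteq> \<infinity>"
      using kg K.LR_pos K.LR_fin unfolding k_def by eventually_elim simp
    define e1 where "e1 = nn_cond_exp Q1 \<O> h"
    define e0 where "e0 = nn_cond_exp Q \<O> h"
    have subFO: "subalgebra \<F> \<O>" using sO spO spF by (simp add: subalgebra_def)
    have hmX: "h \<in> borel_measurable \<X>" unfolding h_def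
      using lrset.LR_meas_G[OF LS[OF par(1) ref(2) ref spX sX]] unfolding Q_def .
    have hm: "h \<in> borel_measurable \<F>" using measurable_from_subalg[OF subFX hmX] .
    have hmQ: "h \<in> borel_measurable Q" unfolding Q_def by (rule measurable_from_subalg[OF SUB[OF ref spF order_refl] hm])
    have hmQ1: "h \<in> borel_measurable Q1" unfolding Q1_def by (rule measurable_from_subalg[OF SUB[OF ref(1) psi1 spF order_refl] hm])
    have e1F: "e1 \<in> borel_measurable \<F>" unfolding e1_def
      by (rule measurable_from_subalg[OF subFO]) simp
    have g1F: "g1 \<in> borel_measurable \<F>" by (rule measurable_from_subalg[OF subFO g1(1)])
    have g1Q: "g1 \<in> borel_measurable Q" unfolding Q_def by (rule measurable_from_subalg[OF SUB[OF ref spF order_refl] g1F])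
    have I: "(\<integral>\<^sup>+x\<in>A. g1 x * h x \<partial>Q) = (\<integral>\<^sup>+x\<in>A. g1 x * e1 x \<partial>Q)" if A: "A \<in> sets \<O>" for A
    proof -
      have AF: "A \<in> sets \<F>" using A sO by auto
      have "(\<integral>\<^sup>+x. g1 x * e1 x * indicator A x \<partial>Q) = (\<integral>\<^sup>+x. k x * (indicator A x * e1 x) \<partial>Q)"
        by (rule nn_integral_cong_AE) (use kg in \<open>auto simp: ac_simps\<close>)
      also have "\<dots> = (\<integral>\<^sup>+x. indicator A x * e1 x \<partial>Q1)"
        unfolding k_def by (rule K.LR_int[symmetric]) (use AF e1F in measurable)
      also have "\<dots> = (\<integral>\<^sup>+x. indicator A x * h x \<partial>Q1)"
        unfolding e1_def by (rule CE1.nn_cond_exp_intg) (use A hmQ1 in measurable)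
      also have "\<dots> = (\<integral>\<^sup>+x. k x * (indicator A x * h x) \<partial>Q)"
        unfolding k_def by (rule K.LR_int) (use AF hm in measurable)
      also have "\<dots> = (\<integral>\<^sup>+x. g1 x * h x * indicator A x \<partial>Q)"
        by (rule nn_integral_cong_AE) (use kg in \<open>auto simp: ac_simps\<close>)
      finally show ?thesis by simp
    qed
    have a1: "AE x in Q. g1 x * e1 x = nn_cond_exp Q \<O> (\<lambda>x. g1 x * h x) x"
      by (rule CE.nn_cond_exp_charact) (use I g1 g1Q hmQ in \<open>auto simp: e1_def\<close>)
    have I0: "(\<integral>\<^sup>+x\<in>A. g1 x * h x \<partial>Q) = (\<integral>\<^sup>+x\<in>A. g1 x * e0 x \<partial>Q)" if A: "A \<in> sets \<O>" for A
    proof -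
      have "(\<integral>\<^sup>+x. (indicator A x * g1 x) * e0 x \<partial>Q) = (\<integral>\<^sup>+x. (indicator A x * g1 x) * h x \<partial>Q)"
        unfolding e0_def by (rule CE.nn_cond_exp_intg) (use A g1(1) hmQ in measurable)
      then show ?thesis by (simp add: ac_simps)
    qed
    have a0: "AE x in Q. g1 x * e0 x = nn_cond_exp Q \<O> (\<lambda>x. g1 x * h x) x"
      by (rule CE.nn_cond_exp_charact) (use I0 g1 g1Q hmQ in \<open>auto simp: e0_def\<close>)
    have "AE x in Q. e1 x = e0 x"
      using a0 a1 g1nz
    proof eventually_elim
      case (elim x)
      then have "g1 x * e1 x = g1 x * e0 x" by simp
      with elim(3) show "e1 x = e0 x" by (subst (asm) ennreal_mult_cancel_left) auto
    qed
    then show ?thesis unfolding e1_def e0_def hh Q1_def .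
  qed
  show ?thesis
  proof (intro conjI ballI)
    show "AE \<omega> in P \<theta>0 \<psi>0. LR (P \<theta> \<psi>) (P \<theta>0 \<psi>0) \<O> \<omega> = cond_LR \<Omega> (P \<theta> \<psi>) (P \<theta>0 \<psi>0) \<R> \<X> \<omega> * nn_cond_exp (P \<theta>0 \<psi>0) \<O> (LR (P \<theta> \<psi>0) (P \<theta>0 \<psi>0) \<X>) \<omega>"
      using part1 unfolding Q_def h_def .
    fix \<psi>1 assume "\<psi>1 \<in> \<Psi>"
    show "AE \<omega> in P \<theta>0 \<psi>0. nn_cond_exp (P \<theta>0 \<psi>1) \<O> (LR (P \<theta> \<psi>1) (P \<theta>0 \<psi>1) \<X>) \<omega> = nn_cond_exp (P \<theta>0 \<psi>0) \<O> (LR (P \<theta> \<psi>0) (P \<theta>0 \<psi>0) \<X>) \<omega>"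
      using part2[OF \<open>\<psi>1 \<in> \<Psi>\<close>] unfolding Q_def h_def .
  qed
qed


end
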